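(* Let $p\in[1,\infty)\setminus\{2\}$, let $(X,\mathcal{B},\mu)$ and $(Y,\mathcal{C},\nu)$ be $\sigma$-finite measure spaces, and let $\lambda\mapsto s_\lambda\in L(L^p(X,\mu),L^p(Y,\nu))$, $\lambda\in[0,1]$, be a norm continuous path of surjective isometries. Let $S_\lambda$ be the spatial realization of $s_\lambda$. Then $S_0=S_1$.
   Context: By Lamperti's theorem (cited), for $p\ne2$ every surjective isometry $s$ between such $L^p$ spaces is a spatial isometry: there are a bijective measurable set transformation $S\colon\mathcal{B}/\mathcal{N}(\mu)\to\mathcal{C}/\mathcal{N}(\nu)$ (a Boolean algebra homomorphism preserving countable unions, $\mathcal{N}$ denoting null sets) and a measurable $g$ with $|g|=1$ a.e. such that $s\xi=g\,[dS_*(\mu)/d\nu]^{1/p}S_*(\xi)$, where $S_*$ is the induced linear map on measurable functions with $S_*(\chi_E)=\chi_{S(E)}$ preserving a.e. limits, and $S_*(\mu)(F)=\mu(E)$ when $S([E])=[F]$. This $S$ is uniquely determined by $s$ and is called its spatial realization. *)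

theory Defs
  imports "HOL-Analysis.Analysis"
begin

text \<open>Elements of L^p(X,mu) are represented by complex-valued measurable functions
  with integrable p-th power of the modulus; operators act on representatives and are
  required to respect equality almost everywhere.\<close>

definition Lp_fun :: "'a measure \<Rightarrow> real \<Rightarrow> ('a \<Rightarrow> complex) \<Rightarrow> bool" where
  "Lp_fun M p f \<longleftrightarrow> f \<in> borel_measurable M \<and> integrable M (\<lambda>x. norm (f x) powr p)"

definition Lp_norm :: "'a measure \<Rightarrow> real \<Rightarrow> ('a \<Rightarrow> complex) \<Rightarrow> real" where
  "Lp_norm M p f = (integral\<^sup>L M (\<lambda>x. norm (f x) powr p)) powr (1 / p)"

definition ae_eq :: "'a measure \<Rightarrow> ('a \<Rightarrow> 'c) \<Rightarrow> ('a \<Rightarrow> 'c) \<Rightarrow> bool" where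
  "ae_eq M f g \<longleftrightarrow> (AE x in M. f x = g x)"

definition Lp_surj_isometry ::
  "'a measure \<Rightarrow> 'b measure \<Rightarrow> real \<Rightarrow> (('a \<Rightarrow> complex) \<Rightarrow> ('b \<Rightarrow> complex)) \<Rightarrow> bool" where
  "Lp_surj_isometry M N p s \<longleftrightarrow>
     (\<forall>f. Lp_fun M p f \<longrightarrow> Lp_fun N p (s f)) \<and>
     (\<forall>f g. Lp_fun M p f \<longrightarrow> Lp_fun M p g \<longrightarrow> ae_eq M f g \<longrightarrow> ae_eq N (s f) (s g)) \<and>
     (\<forall>f g a b. Lp_fun M p f \<longrightarrow> Lp_fun M p g \<longrightarrow>
        ae_eq N (s (\<lambda>x. a * f x + b * g x)) (\<lambda>y. a * s f y + b * s g y)) \<and>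
     (\<forall>f. Lp_fun M p f \<longrightarrow> Lp_norm N p (s f) = Lp_norm M p f) \<and>
     (\<forall>h. Lp_fun N p h \<longrightarrow> (\<exists>f. Lp_fun M p f \<and> ae_eq N (s f) h))"

definition Lp_norm_continuous_path ::
  "'a measure \<Rightarrow> 'b measure \<Rightarrow> real \<Rightarrow> (real \<Rightarrow> ('a \<Rightarrow> complex) \<Rightarrow> ('b \<Rightarrow> complex)) \<Rightarrow> bool" where
  "Lp_norm_continuous_path M N p s \<longleftrightarrow>
     (\<forall>l\<in>{0..1}. \<forall>e>0. \<exists>d>0. \<forall>m\<in>{0..1}. \<bar>m - l\<bar> < d \<longrightarrow>
        (\<forall>f. Lp_fun M p f \<longrightarrow> Lp_norm M p f \<le> 1 \<longrightarrow>
             Lp_norm N p (\<lambda>y. s m f y - s l f y) \<le> e))"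

definition null_equiv :: "'a measure \<Rightarrow> 'a set \<Rightarrow> 'a set \<Rightarrow> bool" where
  "null_equiv M A B \<longleftrightarrow> A \<in> sets M \<and> B \<in> sets M \<and> (A - B) \<union> (B - A) \<in> null_sets M"

text \<open>A bijective measurable set transformation B/N(mu) \<rightarrow> C/N(nu), given on
  representatives: a Boolean algebra homomorphism preserving countable unions.\<close>
definition set_transformation ::
  "'a measure \<Rightarrow> 'b measure \<Rightarrow> ('a set \<Rightarrow> 'b set) \<Rightarrow> bool" where
  "set_transformation M N S \<longleftrightarrow>
     (\<forall>E\<in>sets M. S E \<in> sets N) \<and>
     (\<forall>E F. null_equiv M E F \<longrightarrow> null_equiv N (S E) (S F)) \<and>
     (\<forall>E\<in>sets M. null_equiv N (S (space M - E)) (space N - S E)) \<and>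
     (\<forall>A :: nat \<Rightarrow> 'a set. range A \<subseteq> sets M \<longrightarrow>
        null_equiv N (S (\<Union>i. A i)) (\<Union>i. S (A i))) \<and>
     (\<forall>E\<in>sets M. \<forall>F\<in>sets M. null_equiv N (S E) (S F) \<longrightarrow> null_equiv M E F) \<and>
     (\<forall>F\<in>sets N. \<exists>E\<in>sets M. null_equiv N (S E) F)"

definition induced_map ::
  "'a measure \<Rightarrow> 'b measure \<Rightarrow> ('a set \<Rightarrow> 'b set) \<Rightarrow>
   (('a \<Rightarrow> complex) \<Rightarrow> ('b \<Rightarrow> complex)) \<Rightarrow> bool" where
  "induced_map M N S T \<longleftrightarrow>
     (\<forall>f\<in>borel_measurable M. T f \<in> borel_measurable N) \<and>
     (\<forall>E\<in>sets M. ae_eq N (T (\<lambda>x. indicator E x)) (\<lambda>y. indicator (S E) y)) \<and>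
     (\<forall>f\<in>borel_measurable M. \<forall>g\<in>borel_measurable M. \<forall>a b.
        ae_eq N (T (\<lambda>x. a * f x + b * g x)) (\<lambda>y. a * T f y + b * T g y)) \<and>
     (\<forall>F f. (\<forall>n. F n \<in> borel_measurable M) \<longrightarrow> f \<in> borel_measurable M \<longrightarrow>
        (AE x in M. (\<lambda>n. F n x) \<longlonglongrightarrow> f x) \<longrightarrow>
        (AE y in N. (\<lambda>n. T (F n) y) \<longlonglongrightarrow> T f y))"

text \<open>S is the spatial realization of s: s xi = g (dS_*(mu)/dnu)^(1/p) S_*(xi).
  The Radon--Nikodym derivative h = dS_*(mu)/dnu is characterised by
  S_*(mu)(S E) = mu(E) = integral over S E of h dnu.\<close>
definition spatial_realization ::
  "'a measure \<Rightarrow> 'b measure \<Rightarrow> real \<Rightarrow> (('a \<Rightarrow> complex) \<Rightarrow> ('b \<Rightarrow> complex)) \<Rightarrow>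
   ('a set \<Rightarrow> 'b set) \<Rightarrow> bool" where
  "spatial_realization M N p s S \<longleftrightarrow>
     set_transformation M N S \<and>
     (\<exists>g T h. g \<in> borel_measurable N \<and> (AE y in N. norm (g y) = 1) \<and>
        induced_map M N S T \<and>
        h \<in> borel_measurable N \<and>
        (\<forall>E\<in>sets M. emeasure M E = set_nn_integral N (S E) h) \<and>
        (\<forall>xi. Lp_fun M p xi \<longrightarrow>
           ae_eq N (s xi) (\<lambda>y. g y * complex_of_real (enn2real (h y) powr (1 / p)) * T xi y)))"

end

theory Submission
  imports Defs
begin


lemma powr_concave: "0 < r \<Longrightarrow> r \<le> 1 \<Longrightarrow> concave_on {0<..} (\<lambda>x::real. x powr r)"
  apply (intro f''_le0_imp_concave derivative_eq_intros | simp)+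
  apply (rule mult_nonpos_nonneg, rule mult_nonpos_nonneg) by auto

lemma jensen_ge:
  fixes x y r :: real
  assumes "r \<ge> 1" "x \<ge> 0" "y \<ge> 0"
  shows "2 * ((x+y)/2) powr r \<le> x powr r + y powr r"
proof -
  have two: "2 \<le> (2::real) powr r" using powr_mono[of 1 r 2] assms by simp
  have gen: "2 * (z/2) powr r \<le> z powr r" if "z \<ge> 0" for z :: real
  proof -
    have "(z/2) powr r = z powr r / 2 powr r" using that by (simp add: powr_divide)
    moreover have "2 * (z powr r / 2 powr r) \<le> z powr r"
      using mult_right_mono[OF two, of "z powr r"] by (simp add: divide_simps mult.commute)
    ultimately show ?thesis by simp
  qed
  show ?thesis
  proof (cases "x = 0 \<or> y = 0")
    case True
    then show ?thesis using gen[of x] gen[of y] assms by auto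
  next
    case False
    then have "x > 0" "y > 0" using assms by auto
    from convex_onD[OF powr_convex[OF assms(1)], of "1/2" x y] this
    show ?thesis by (simp add: field_simps)
  qed
qed

lemma jensen_le:
  fixes x y r :: real
  assumes "0 < r" "r \<le> 1" "x \<ge> 0" "y \<ge> 0"
  shows "2 * ((x+y)/2) powr r \<ge> x powr r + y powr r"
proof -
  have two: "2 \<ge> (2::real) powr r" using powr_mono[of r 1 2] assms by simp
  have gen: "2 * (z/2) powr r \<ge> z powr r" if "z \<ge> 0" for z :: real
  proof -
    have "(z/2) powr r = z powr r / 2 powr r" using that by (simp add: powr_divide)
    moreover have "2 * (z powr r / 2 powr r) \<ge> z powr r"
      using mult_right_mono[OF two, of "z powr r"] by (simp add: divide_simps mult.commute)
    ultimately show ?thesis by simp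
  qed
  show ?thesis
  proof (cases "x = 0 \<or> y = 0")
    case True
    then show ?thesis using gen[of x] gen[of y] assms by auto
  next
    case False
    then have "x > 0" "y > 0" using assms by auto
    from concave_onD[OF powr_concave[OF assms(1,2)], of "1/2" x y] this
    show ?thesis by (simp add: field_simps)
  qed
qed

lemma superadd:
  fixes u v r :: real
  assumes "u > 0" "v > 0" "r > 1"
  shows "u powr r + v powr r < (u+v) powr r"
proof -
  have "u powr (r-1) < (u+v) powr (r-1)" using assms by (intro powr_less_mono2) auto
  hence a: "u * u powr (r-1) < u * (u+v) powr (r-1)" using assms by simp
  have "v powr (r-1) < (u+v) powr (r-1)" using assms by (intro powr_less_mono2) auto
  hence b: "v * v powr (r-1) < v * (u+v) powr (r-1)" using assms by simp
  have e: "z * z powr (r-1) = z powr r" if "z > 0" for z :: real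
    using that by (simp add: powr_mult_base)
  have "u powr r + v powr r < (u+v) * (u+v) powr (r-1)" using a b e[of u] e[of v] assms
    by (simp add: distrib_right)
  also have "\<dots> = (u+v) powr r" using e[of "u+v"] assms by simp
  finally show ?thesis .
qed

lemma subadd:
  fixes u v r :: real
  assumes "u > 0" "v > 0" "r < 1"
  shows "u powr r + v powr r > (u+v) powr r"
proof -
  have "u powr (r-1) > (u+v) powr (r-1)" using assms by (intro powr_less_mono2_neg) auto
  hence a: "u * u powr (r-1) > u * (u+v) powr (r-1)" using assms by simp
  have "v powr (r-1) > (u+v) powr (r-1)" using assms by (intro powr_less_mono2_neg) auto
  hence b: "v * v powr (r-1) > v * (u+v) powr (r-1)" using assms by simp
  have e: "z * z powr (r-1) = z powr r" if "z > 0" for z :: real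
    using that by (simp add: powr_mult_base)
  have "u powr r + v powr r > (u+v) * (u+v) powr (r-1)" using a b e[of u] e[of v] assms
    by (simp add: distrib_right)
  also have "(u+v) * (u+v) powr (r-1) = (u+v) powr r" using e[of "u+v"] assms by simp
  finally show ?thesis .
qed

definition Phi :: "real \<Rightarrow> complex \<Rightarrow> complex \<Rightarrow> real" where
  "Phi p a b = cmod (a+b) powr p + cmod (a-b) powr p - 2 * cmod a powr p - 2 * cmod b powr p"

lemma Phi_zero: "a = 0 \<or> b = 0 \<Longrightarrow> Phi p a b = 0"
  by (auto simp: Phi_def norm_minus_commute)

lemma powr_sq: "0 \<le> (c::real) \<Longrightarrow> 0 < p \<Longrightarrow> c powr p = (c^2) powr (p/2)"
proof (cases "c = 0")
  case False
  assume "0 \<le> c" "0 < p"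
  then have "c > 0" using False by linarith
  then have "c^2 = c powr 2" by (simp add: powr_realpow)
  have "(c powr 2) powr (p/2) = c powr p" by (simp add: powr_powr)
  then show ?thesis using \<open>c^2 = c powr 2\<close> by simp
qed auto

lemma parallelogram: "(cmod (a+b))^2 + (cmod (a-b))^2 = 2 * ((cmod a)^2 + (cmod b)^2)"
  unfolding cmod_power2 by (simp add: power2_eq_square algebra_simps)

lemma Phi_strict:
  assumes "p \<ge> 1" "a \<noteq> 0" "b \<noteq> 0"
  shows "(p > 2 \<longrightarrow> Phi p a b > 0) \<and> (p < 2 \<longrightarrow> Phi p a b < 0)"
proof -
  define r where "r = p/2"
  define x where "x = (cmod (a+b))^2"
  define y where "y = (cmod (a-b))^2"
  define u where "u = (cmod a)^2"
  define v where "v = (cmod b)^2"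
  have p0: "p > 0" using assms by simp
  have Ph: "Phi p a b = x powr r + y powr r - 2 * u powr r - 2 * v powr r"
    unfolding Phi_def x_def y_def u_def v_def r_def
    by (simp add: powr_sq[OF norm_ge_zero p0])
  have xy: "x \<ge> 0" "y \<ge> 0" "u > 0" "v > 0" using assms by (auto simp: x_def y_def u_def v_def)
  have m: "(x+y)/2 = u+v" using parallelogram[of a b] by (simp add: x_def y_def u_def v_def)
  show ?thesis
  proof (intro conjI impI)
    assume "p > 2"
    then have r1: "r > 1" "r \<ge> 1" by (auto simp: r_def)
    have "2 * (u+v) powr r \<le> x powr r + y powr r" using jensen_ge[OF r1(2) xy(1,2)] m by simp
    moreover have "u powr r + v powr r < (u+v) powr r" using superadd[OF xy(3,4) r1(1)] .
    ultimately show "Phi p a b > 0" using Ph by linarith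
  next
    assume "p < 2"
    then have r1: "r < 1" "r \<le> 1" "0 < r" using p0 by (auto simp: r_def)
    have "2 * (u+v) powr r \<ge> x powr r + y powr r" using jensen_le[OF r1(3,2) xy(1,2)] m by simp
    moreover have "u powr r + v powr r > (u+v) powr r" using subadd[OF xy(3,4) r1(1)] .
    ultimately show "Phi p a b < 0" using Ph by linarith
  qed
qed



definition Pp :: "'a measure \<Rightarrow> real \<Rightarrow> ('a \<Rightarrow> complex) \<Rightarrow> real" where
  "Pp M p f = integral\<^sup>L M (\<lambda>x. cmod (f x) powr p)"

lemma powr_sum_bound:
  fixes A B C p :: real
  assumes "p > 0" "A \<ge> 0" "B \<ge> 0" "C \<le> A + B" "C \<ge> 0"
  shows "C powr p \<le> 2 powr p * (A powr p + B powr p)"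
proof -
  have "C \<le> 2 * max A B" using assms by linarith
  hence "C powr p \<le> (2 * max A B) powr p" using assms by (intro powr_mono2) auto
  also have "\<dots> = 2 powr p * max A B powr p" using assms by (simp add: powr_mult)
  also have "max A B powr p \<le> A powr p + B powr p" by (cases "A \<le> B") (auto simp: max_def)
  hence "2 powr p * max A B powr p \<le> 2 powr p * (A powr p + B powr p)" by simp
  finally show ?thesis .
qed

lemma Lp_lin:
  assumes p: "p > 0" and f: "Lp_fun M p f" and g: "Lp_fun M p g"
  shows "Lp_fun M p (\<lambda>x. a * f x + b * g x)"
proof -
  have fm[measurable]: "f \<in> borel_measurable M" and gm[measurable]: "g \<in> borel_measurable M"
    and fi: "integrable M (\<lambda>x. cmod (f x) powr p)" and gi: "integrable M (\<lambda>x. cmod (g x) powr p)"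
    using f g by (auto simp: Lp_fun_def)
  have "integrable M (\<lambda>x. 2 powr p * (cmod a powr p * cmod (f x) powr p + cmod b powr p * cmod (g x) powr p))"
    using fi gi by auto
  moreover have "(\<lambda>x. cmod (a * f x + b * g x) powr p) \<in> borel_measurable M" by measurable
  moreover have "AE x in M. norm (cmod (a * f x + b * g x) powr p) \<le>
      norm (2 powr p * (cmod a powr p * cmod (f x) powr p + cmod b powr p * cmod (g x) powr p))"
  proof (intro AE_I2)
    fix x
    have "cmod (a * f x + b * g x) powr p \<le> 2 powr p * (cmod (a * f x) powr p + cmod (b * g x) powr p)"
      using p by (intro powr_sum_bound norm_triangle_ineq) auto
    also have "\<dots> = 2 powr p * (cmod a powr p * cmod (f x) powr p + cmod b powr p * cmod (g x) powr p)"
      by (simp add: norm_mult powr_mult)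
    finally show "norm (cmod (a * f x + b * g x) powr p) \<le>
      norm (2 powr p * (cmod a powr p * cmod (f x) powr p + cmod b powr p * cmod (g x) powr p))"
      by simp
  qed
  ultimately have "integrable M (\<lambda>x. cmod (a * f x + b * g x) powr p)" by (rule Bochner_Integration.integrable_bound)
  then show ?thesis by (simp add: Lp_fun_def)
qed

lemma Lp_add: "p > 0 \<Longrightarrow> Lp_fun M p f \<Longrightarrow> Lp_fun M p g \<Longrightarrow> Lp_fun M p (\<lambda>x. f x + g x)"
  using Lp_lin[of p M f g 1 1] by simp

lemma Lp_diff: "p > 0 \<Longrightarrow> Lp_fun M p f \<Longrightarrow> Lp_fun M p g \<Longrightarrow> Lp_fun M p (\<lambda>x. f x - g x)"
  using Lp_lin[of p M f g 1 "-1"] by simp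

lemma Lp_meas[measurable_dest]: "Lp_fun M p f \<Longrightarrow> f \<in> borel_measurable M"
  by (simp add: Lp_fun_def)

lemma Lp_int: "Lp_fun M p f \<Longrightarrow> integrable M (\<lambda>x. cmod (f x) powr p)"
  by (simp add: Lp_fun_def)

lemma Pp_nonneg: "Pp M p f \<ge> 0"
  unfolding Pp_def by (intro integral_nonneg_AE) auto

lemma Lp_norm_Pp: "Lp_norm M p f = Pp M p f powr (1/p)"
  by (simp add: Lp_norm_def Pp_def)

lemma powr_inv_inj: "p > 0 \<Longrightarrow> (x::real) \<ge> 0 \<Longrightarrow> y \<ge> 0 \<Longrightarrow> x powr (1/p) = y powr (1/p) \<Longrightarrow> x = y"
  by (metis powr_powr powr_one nonzero_eq_divide_eq less_irrefl mult.commute)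

lemma Pp_cong: "ae_eq N f g \<Longrightarrow> f \<in> borel_measurable N \<Longrightarrow> g \<in> borel_measurable N \<Longrightarrow> Pp N p f = Pp N p g"
  unfolding Pp_def ae_eq_def by (intro integral_cong_AE) auto

locale iso =
  fixes M :: "'a measure" and N :: "'b measure" and p :: real and s
  assumes iso: "Lp_surj_isometry M N p s" and p1: "p \<ge> 1"
begin

lemma p0: "p > 0" using p1 by simp

lemma Lp: "Lp_fun M p f \<Longrightarrow> Lp_fun N p (s f)"
  using iso by (simp add: Lp_surj_isometry_def)
lemma ae: "Lp_fun M p f \<Longrightarrow> Lp_fun M p g \<Longrightarrow> ae_eq M f g \<Longrightarrow> ae_eq N (s f) (s g)"
  using iso by (simp add: Lp_surj_isometry_def)
lemma lin: "Lp_fun M p f \<Longrightarrow> Lp_fun M p g \<Longrightarrow> ae_eq N (s (\<lambda>x. a * f x + b * g x)) (\<lambda>y. a * s f y + b * s g y)"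
  using iso by (simp add: Lp_surj_isometry_def)
lemma norm: "Lp_fun M p f \<Longrightarrow> Lp_norm N p (s f) = Lp_norm M p f"
  using iso by (simp add: Lp_surj_isometry_def)
lemma surj: "Lp_fun N p h \<Longrightarrow> \<exists>f. Lp_fun M p f \<and> ae_eq N (s f) h"
  using iso by (simp add: Lp_surj_isometry_def)

lemma Pp: "Lp_fun M p f \<Longrightarrow> Pp N p (s f) = Pp M p f"
  using norm[of f] powr_inv_inj[OF p0 Pp_nonneg Pp_nonneg] by (simp add: Lp_norm_Pp)

lemma Pp_lin: assumes "Lp_fun M p f" "Lp_fun M p g"
  shows "Pp N p (\<lambda>y. a * s f y + b * s g y) = Pp M p (\<lambda>x. a * f x + b * g x)"
proof -
  have "Pp N p (\<lambda>y. a * s f y + b * s g y) = Pp N p (s (\<lambda>x. a * f x + b * g x))"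
    using lin[OF assms, of a b] Lp_lin[OF p0 assms] Lp[OF Lp_lin[OF p0 assms]] Lp[OF assms(1)] Lp[OF assms(2)]
    by (intro Pp_cong) (auto simp: ae_eq_def elim: AE_mp)
  also have "\<dots> = Pp M p (\<lambda>x. a * f x + b * g x)" using Pp[OF Lp_lin[OF p0 assms]] .
  finally show ?thesis .
qed

end



lemma Phi_meas[measurable]:
  assumes [measurable]: "f \<in> borel_measurable M" "g \<in> borel_measurable M"
  shows "(\<lambda>x. Phi p (f x) (g x)) \<in> borel_measurable M"
  unfolding Phi_def by measurable

lemma Phi_int:
  assumes p: "p > 0" and f: "Lp_fun M p f" and g: "Lp_fun M p g"
  shows "integrable M (\<lambda>x. Phi p (f x) (g x))"
    and "integral\<^sup>L M (\<lambda>x. Phi p (f x) (g x)) =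
      Pp M p (\<lambda>x. f x + g x) + Pp M p (\<lambda>x. f x - g x) - 2 * Pp M p f - 2 * Pp M p g"
proof -
  note i = Lp_int[OF Lp_add[OF p f g]] Lp_int[OF Lp_diff[OF p f g]] Lp_int[OF f] Lp_int[OF g]
  show "integrable M (\<lambda>x. Phi p (f x) (g x))" unfolding Phi_def using i by auto
  show "integral\<^sup>L M (\<lambda>x. Phi p (f x) (g x)) =
      Pp M p (\<lambda>x. f x + g x) + Pp M p (\<lambda>x. f x - g x) - 2 * Pp M p f - 2 * Pp M p g"
    unfolding Phi_def Pp_def using i by (simp add: integral_diff integral_add)
qed

lemma Phi_eq0:
  assumes p: "p \<ge> 1" "p \<noteq> 2" and z: "Phi p a b = 0"
  shows "a = 0 \<or> b = 0"
proof (rule ccontr)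
  assume "\<not> (a = 0 \<or> b = 0)"
  then show False using Phi_strict[OF p(1), of a b] p(2) z by (auto simp: not_less_iff_gr_or_eq)
qed

lemma disj_iff:
  assumes p: "p \<ge> 1" "p \<noteq> 2" and f: "Lp_fun M p f" and g: "Lp_fun M p g"
  shows "(AE x in M. f x = 0 \<or> g x = 0) \<longleftrightarrow> integral\<^sup>L M (\<lambda>x. Phi p (f x) (g x)) = 0"
proof
  assume "AE x in M. f x = 0 \<or> g x = 0"
  then have "AE x in M. Phi p (f x) (g x) = 0" by (rule AE_mp) (auto intro!: AE_I2 Phi_zero)
  then have "integral\<^sup>L M (\<lambda>x. Phi p (f x) (g x)) = integral\<^sup>L M (\<lambda>x. 0)"
    using f g by (intro integral_cong_AE) auto
  then show "integral\<^sup>L M (\<lambda>x. Phi p (f x) (g x)) = 0" by simp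
next
  assume z: "integral\<^sup>L M (\<lambda>x. Phi p (f x) (g x)) = 0"
  have p0: "p > 0" using p by simp
  have I: "integrable M (\<lambda>x. Phi p (f x) (g x))" using Phi_int[OF p0 f g] by simp
  show "AE x in M. f x = 0 \<or> g x = 0"
  proof (cases "p > 2")
    case True
    have nn: "Phi p a b \<ge> 0" for a b
      using Phi_zero[of a b p] Phi_strict[OF p(1), of a b] True by (cases "a = 0 \<or> b = 0") auto
    have "AE x in M. Phi p (f x) (g x) = 0"
      using integral_nonneg_eq_0_iff_AE[OF I] nn z by auto
    then show ?thesis by (rule AE_mp) (rule AE_I2, use Phi_eq0[OF p] in blast)
  next
    case False
    then have lt: "p < 2" using p by simp
    have nn: "- Phi p a b \<ge> 0" for a b
      using Phi_zero[of a b p] Phi_strict[OF p(1), of a b] lt by (cases "a = 0 \<or> b = 0") auto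
    have I': "integrable M (\<lambda>x. - Phi p (f x) (g x))" using I by simp
    have "AE x in M. - Phi p (f x) (g x) = 0"
      using integral_nonneg_eq_0_iff_AE[OF I'] nn z by auto
    then show ?thesis by (rule AE_mp) (rule AE_I2, use Phi_eq0[OF p] in force)
  qed
qed

context iso begin

lemma Phi_iso:
  assumes f: "Lp_fun M p f" and g: "Lp_fun M p g"
  shows "integral\<^sup>L N (\<lambda>y. Phi p (s f y) (s g y)) = integral\<^sup>L M (\<lambda>x. Phi p (f x) (g x))"
proof -
  have "Pp N p (\<lambda>y. s f y + s g y) = Pp M p (\<lambda>x. f x + g x)"
    using Pp_lin[OF f g, of 1 1] by simp
  moreover have "Pp N p (\<lambda>y. s f y - s g y) = Pp M p (\<lambda>x. f x - g x)"
    using Pp_lin[OF f g, of 1 "-1"] by simp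
  ultimately show ?thesis
    using Phi_int(2)[OF p0 f g] Phi_int(2)[OF p0 Lp[OF f] Lp[OF g]] Pp[OF f] Pp[OF g] by simp
qed

lemma disj_iso:
  assumes "p \<noteq> 2" and f: "Lp_fun M p f" and g: "Lp_fun M p g"
  shows "(AE x in M. f x = 0 \<or> g x = 0) \<longleftrightarrow> (AE y in N. s f y = 0 \<or> s g y = 0)"
  using disj_iff[OF p1 assms(1) f g] disj_iff[OF p1 assms(1) Lp[OF f] Lp[OF g]] Phi_iso[OF f g] by simp

lemma inj:
  assumes u: "Lp_fun M p u" and v: "Lp_fun M p v" and e: "ae_eq N (s u) (s v)"
  shows "ae_eq M u v"
proof -
  have "Pp N p (\<lambda>y. 1 * s u y + (-1) * s v y) = Pp N p (\<lambda>y. 0)"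
    using e Lp[OF u] Lp[OF v] by (intro Pp_cong) (auto simp: ae_eq_def elim!: AE_mp)
  also have "\<dots> = 0" using p0 by (simp add: Pp_def)
  finally have "Pp M p (\<lambda>x. 1 * u x + (-1) * v x) = 0" using Pp_lin[OF u v, of 1 "-1"] by simp
  then have "Pp M p (\<lambda>x. u x - v x) = 0" by simp
  then have "AE x in M. cmod (u x - v x) powr p = 0"
    using integral_nonneg_eq_0_iff_AE[OF Lp_int[OF Lp_diff[OF p0 u v]]] by (simp add: Pp_def)
  then show ?thesis unfolding ae_eq_def by (auto elim!: AE_mp)
qed

end



lemma Lp_bound:
  assumes p: "p > 0" and a: "Lp_fun N p a" and h[measurable]: "h \<in> borel_measurable N"
    and b: "\<And>y. cmod (h y) \<le> cmod (a y)"
  shows "Lp_fun N p h"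
proof -
  have "integrable N (\<lambda>y. cmod (h y) powr p)"
    by (rule Bochner_Integration.integrable_bound[OF Lp_int[OF a]])
       (auto intro!: powr_mono2 b simp: p less_imp_le)
  then show ?thesis by (simp add: Lp_fun_def)
qed

lemma cmod_ind_powr: "p > 0 \<Longrightarrow> cmod (c * indicator A x :: complex) powr p = cmod c powr p * indicator A x"
  by (auto simp: indicator_def)

lemma Lp_ind:
  assumes p: "p > 0" and E: "E \<in> sets M" "emeasure M E < \<infinity>"
  shows "Lp_fun M p (indicator E :: _ \<Rightarrow> complex)" and "Pp M p (indicator E :: _ \<Rightarrow> complex) = measure M E"
proof -
  have eq: "(\<lambda>x. cmod (indicator E x :: complex) powr p) = indicator E"
    using p by (auto simp: indicator_def)
  show "Lp_fun M p (indicator E :: _ \<Rightarrow> complex)"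
    unfolding Lp_fun_def eq using E by (auto intro: integrable_real_indicator)
  show "Pp M p (indicator E :: _ \<Rightarrow> complex) = measure M E"
    unfolding Pp_def eq using E by simp
qed

lemma close_supp:
  fixes sl sm :: "('a \<Rightarrow> complex) \<Rightarrow> ('b \<Rightarrow> complex)"
  assumes il: "iso M N p sl" and im: "iso M N p sm" and p2: "p \<noteq> 2"
    and cl: "\<forall>f. Lp_fun M p f \<longrightarrow> Lp_norm M p f \<le> 1 \<longrightarrow> Lp_norm N p (\<lambda>y. sm f y - sl f y) \<le> 1/2"
    and E: "E \<in> sets M" "emeasure M E < \<infinity>"
  shows "AE y in N. sl (indicator E) y \<noteq> 0 \<longrightarrow> sm (indicator E) y \<noteq> 0"
proof (rule ccontr)
  interpret L: iso M N p sl by fact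
  interpret R: iso M N p sm by fact
  have p0: "p > 0" by (rule L.p0)
  assume nAE: "\<not> (AE y in N. sl (indicator E) y \<noteq> 0 \<longrightarrow> sm (indicator E) y \<noteq> 0)"
  define a where "a = sl (indicator E)"
  define b where "b = sm (indicator E)"
  have LE: "Lp_fun M p (indicator E :: _ \<Rightarrow> complex)" using Lp_ind[OF p0 E] by simp
  have La: "Lp_fun N p a" and Lb: "Lp_fun N p b" unfolding a_def b_def using L.Lp[OF LE] R.Lp[OF LE] .
  have am[measurable]: "a \<in> borel_measurable N" and bm[measurable]: "b \<in> borel_measurable N"
    using La Lb by (auto simp: Lp_fun_def)
  define G where "G = {y\<in>space N. a y \<noteq> 0 \<and> b y = 0}"
  have Gm[measurable]: "G \<in> sets N" unfolding G_def by measurable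
  have Gnn: "G \<notin> null_sets N"
  proof
    assume "G \<in> null_sets N"
    then have "AE y in N. y \<notin> G" by (rule AE_not_in)
    then have "AE y in N. sl (indicator E) y \<noteq> 0 \<longrightarrow> sm (indicator E) y \<noteq> 0"
      by (rule AE_mp) (rule AE_I2, auto simp: G_def a_def b_def)
    then show False using nAE by simp
  qed
  have LaG: "Lp_fun N p (\<lambda>y. a y * indicator G y)"
    by (rule Lp_bound[OF p0 La]) (auto simp: indicator_def)
  have LaG': "Lp_fun N p (\<lambda>y. a y * indicator (space N - G) y)"
    by (rule Lp_bound[OF p0 La]) (auto simp: indicator_def)
  obtain f where Lf: "Lp_fun M p f" and sf: "AE y in N. sl f y = a y * indicator G y"
    using L.surj[OF LaG] by (auto simp: ae_eq_def)
  obtain f' where Lf': "Lp_fun M p f'" and sf': "AE y in N. sl f' y = a y * indicator (space N - G) y"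
    using L.surj[OF LaG'] by (auto simp: ae_eq_def)
  have Lff: "Lp_fun M p (\<lambda>x. 1 * f x + 1 * f' x)" using Lp_lin[OF p0 Lf Lf'] .
  have "AE y in N. sl (\<lambda>x. 1 * f x + 1 * f' x) y = sl (indicator E) y"
    using L.lin[OF Lf Lf', of 1 1] sf sf' AE_space unfolding ae_eq_def
    by eventually_elim (auto simp: a_def indicator_def)
  then have sumE: "AE x in M. 1 * f x + 1 * f' x = indicator E x"
    using L.inj[OF Lff LE] by (simp add: ae_eq_def)
  have "AE y in N. sl f y = 0 \<or> sl f' y = 0"
    using sf sf' by eventually_elim (auto simp: indicator_def)
  then have dff: "AE x in M. f x = 0 \<or> f' x = 0" using L.disj_iso[OF p2 Lf Lf'] by simp
  define F where "F = {x\<in>space M. f x \<noteq> 0} \<inter> E"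
  have Fm[measurable]: "F \<in> sets M" unfolding F_def using Lf E by (auto simp: Lp_fun_def)
  have FE: "F \<subseteq> E" by (auto simp: F_def)
  have Ffin: "emeasure M F < \<infinity>" using emeasure_mono[OF FE E(1)] E(2) by simp
  have LF: "Lp_fun M p (indicator F :: _ \<Rightarrow> complex)" using Lp_ind[OF p0 Fm Ffin] by simp
  have PF: "Pp M p (indicator F :: _ \<Rightarrow> complex) = measure M F" using Lp_ind[OF p0 Fm Ffin] by simp
  have "AE x in M. f x = indicator F x"
    using sumE dff AE_space by eventually_elim (auto simp: F_def indicator_def split: if_splits)
  then have "ae_eq N (sl f) (sl (indicator F))" using L.ae[OF Lf LF] by (simp add: ae_eq_def)
  then have slF: "AE y in N. sl (indicator F) y = a y * indicator G y"
    using sf unfolding ae_eq_def by eventually_elim auto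
  have EFm: "E - F \<in> sets M" using E by auto
  have LEF: "Lp_fun M p (indicator (E - F) :: _ \<Rightarrow> complex)"
    using Lp_ind[OF p0 EFm] emeasure_mono[of "E - F" E M] E by auto
  have "AE x in M. (indicator F x :: complex) = 0 \<or> (indicator (E - F) x :: complex) = 0"
    by (rule AE_I2) (auto simp: indicator_def)
  then have dR: "AE y in N. sm (indicator F) y = 0 \<or> sm (indicator (E - F)) y = 0"
    using R.disj_iso[OF p2 LF LEF] by simp
  have eqE: "(\<lambda>x. 1 * indicator F x + 1 * indicator (E - F) x :: complex) = indicator E"
    using FE by (auto simp: indicator_def fun_eq_iff)
  have sR: "AE y in N. b y = 1 * sm (indicator F) y + 1 * sm (indicator (E - F)) y"
    using R.lin[OF LF LEF, of 1 1] unfolding eqE ae_eq_def b_def by simp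
  have key: "AE y in N. cmod (sl (indicator F) y) \<le> cmod (sm (indicator F) y - sl (indicator F) y)"
    using slF dR sR AE_space by eventually_elim (auto simp: G_def indicator_def)
  have "Pp N p (sl (indicator F)) = Pp N p (\<lambda>y. a y * indicator G y)"
    using slF L.Lp[OF LF] LaG by (intro Pp_cong) (auto simp: ae_eq_def Lp_fun_def)
  also have "\<dots> = integral\<^sup>L N (\<lambda>y. cmod (a y) powr p * indicator G y)"
    unfolding Pp_def using p0 by (simp add: cmod_ind_powr)
  finally have PsF: "Pp N p (sl (indicator F)) = integral\<^sup>L N (\<lambda>y. cmod (a y) powr p * indicator G y)" .
  have Iag: "integrable N (\<lambda>y. cmod (a y) powr p * indicator G y)"
    using Lp_int[OF LaG] p0 by (simp add: cmod_ind_powr)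
  have "integral\<^sup>L N (\<lambda>y. cmod (a y) powr p * indicator G y) \<noteq> 0"
  proof
    assume "integral\<^sup>L N (\<lambda>y. cmod (a y) powr p * indicator G y) = 0"
    then have "AE y in N. cmod (a y) powr p * indicator G y = 0"
      using integral_nonneg_eq_0_iff_AE[OF Iag] by simp
    then have "AE y in N. y \<notin> G" by (rule AE_mp) (rule AE_I2, auto simp: G_def indicator_def)
    then have "G \<in> null_sets N" using AE_iff_null_sets[OF Gm] by simp
    then show False using Gnn by simp
  qed
  then have "measure M F \<noteq> 0"
    using PsF L.Pp[OF LF] PF by simp
  then have muF: "measure M F > 0" using measure_nonneg[of M F] by linarith
  define cr where "cr = measure M F powr (-1/p)"
  have cr0: "cr > 0" using muF by (simp add: cr_def)
  have crp: "cr powr p * measure M F = 1"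
  proof -
    have "cr powr p = measure M F powr (-1/p * p)" unfolding cr_def by (rule powr_powr)
    also have "-1/p * p = -1" using p0 by simp
    finally have "cr powr p = inverse (measure M F)" using muF by (simp add: powr_minus)
    then show ?thesis using muF by simp
  qed
  define c where "c = complex_of_real cr"
  define xi where "xi = (\<lambda>x. c * indicator F x + 0 * indicator F x :: complex)"
  have Lxi: "Lp_fun M p xi" unfolding xi_def by (rule Lp_lin[OF p0 LF LF])
  have "Pp M p xi = integral\<^sup>L M (\<lambda>x. cr powr p * indicator F x)"
    unfolding Pp_def xi_def c_def using p0 cr0 by (simp add: cmod_ind_powr)
  also have "\<dots> = 1" using crp Fm Ffin by simp
  finally have "Lp_norm M p xi = 1" by (simp add: Lp_norm_Pp)
  then have small: "Lp_norm N p (\<lambda>y. sm xi y - sl xi y) \<le> 1/2" using cl Lxi by simp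
  have Ld: "Lp_fun N p (\<lambda>y. sm xi y - sl xi y)" using Lp_diff[OF p0 R.Lp[OF Lxi] L.Lp[OF Lxi]] .
  have Lsl: "Lp_fun N p (sl (indicator F))" using L.Lp[OF LF] .
  have "AE y in N. cr powr p * cmod (sl (indicator F) y) powr p \<le> cmod (sm xi y - sl xi y) powr p"
    using key R.lin[OF LF LF, of c 0] L.lin[OF LF LF, of c 0] unfolding ae_eq_def xi_def
  proof eventually_elim
    case (elim y)
    have "cmod (sm (\<lambda>x. c * indicator F x + 0 * indicator F x) y - sl (\<lambda>x. c * indicator F x + 0 * indicator F x) y)
        = cr * cmod (sm (indicator F) y - sl (indicator F) y)"
      using elim cr0 by (simp add: c_def right_diff_distrib[symmetric] norm_mult)
    moreover have "cr * cmod (sl (indicator F) y) \<le> cr * cmod (sm (indicator F) y - sl (indicator F) y)"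
      using elim(1) cr0 by simp
    ultimately have "(cr * cmod (sl (indicator F) y)) powr p \<le> cmod (sm (\<lambda>x. c * indicator F x + 0 * indicator F x) y - sl (\<lambda>x. c * indicator F x + 0 * indicator F x) y) powr p"
      using p0 cr0 by (intro powr_mono2) auto
    then show ?case using cr0 by (simp add: powr_mult)
  qed
  then have "integral\<^sup>L N (\<lambda>y. cr powr p * cmod (sl (indicator F) y) powr p) \<le> Pp N p (\<lambda>y. sm xi y - sl xi y)"
    unfolding Pp_def using Lp_int[OF Ld] Lp_int[OF Lsl] by (intro integral_mono_AE) auto
  moreover have "integral\<^sup>L N (\<lambda>y. cr powr p * cmod (sl (indicator F) y) powr p) = 1"
    using L.Pp[OF LF] PF crp by (simp add: Pp_def)
  ultimately have "1 \<le> Pp N p (\<lambda>y. sm xi y - sl xi y)" by simp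
  then have "1 powr (1/p) \<le> Pp N p (\<lambda>y. sm xi y - sl xi y) powr (1/p)"
    using p0 by (intro powr_mono2) auto
  then have "1 \<le> Lp_norm N p (\<lambda>y. sm xi y - sl xi y)" by (simp add: Lp_norm_Pp)
  then show False using small by simp
qed



lemma null_equiv_AE: assumes "null_equiv N X Y" shows "AE y in N. (y \<in> X \<longleftrightarrow> y \<in> Y)"
proof -
  have "(X - Y) \<union> (Y - X) \<in> null_sets N" using assms by (simp add: null_equiv_def)
  from AE_not_in[OF this] show ?thesis by (rule AE_mp) (rule AE_I2, auto)
qed

lemma AE_null_equiv:
  assumes X: "X \<in> sets N" and Y: "Y \<in> sets N" and ae: "AE y in N. (y \<in> X \<longleftrightarrow> y \<in> Y)"
  shows "null_equiv N X Y"
proof -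
  have m: "(X - Y) \<union> (Y - X) \<in> sets N" using X Y by auto
  have "AE y in N. y \<notin> (X - Y) \<union> (Y - X)" using ae by (rule AE_mp) (rule AE_I2, auto)
  then show ?thesis unfolding null_equiv_def using AE_iff_null_sets[OF m] X Y by simp
qed

lemma S_empty_null:
  assumes ST: "set_transformation M N S"
  shows "S {} \<in> null_sets N"
proof -
  define A where "A = (\<lambda>i::nat. if i = 0 then {} else space M)"
  have rA: "range A \<subseteq> sets M" by (auto simp: A_def)
  have U: "(\<Union>i. A i) = space M" by (auto simp: A_def)
  have U2: "(\<Union>i. S (A i)) = S {} \<union> S (space M)"
    by (auto simp: A_def split: if_splits)
  have n1: "null_equiv N (S (space M)) (S {} \<union> S (space M))"
    using ST rA unfolding set_transformation_def by (metis U U2)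
  have n2: "null_equiv N (S (space M - {})) (space N - S {})"
    using ST unfolding set_transformation_def by blast
  have X: "S {} \<in> sets N" and Y: "S (space M) \<in> sets N" using ST unfolding set_transformation_def by auto
  have "AE y in N. y \<notin> S {}"
    using null_equiv_AE[OF n1] null_equiv_AE[OF n2] AE_space by eventually_elim auto
  then show ?thesis using AE_iff_null_sets[OF X] by simp
qed

lemma realization_supp:
  assumes p: "p \<ge> 1" and SR: "spatial_realization M N p s S"
    and E: "E \<in> sets M" "emeasure M E < \<infinity>"
  shows "AE y in N. (s (indicator E) y \<noteq> 0 \<longleftrightarrow> y \<in> S E)"
proof -
  have p0: "p > 0" using p by simp
  have ST: "set_transformation M N S" using SR by (simp add: spatial_realization_def)
  obtain g T h where gm: "g \<in> borel_measurable N" and g1: "AE y in N. norm (g y) = 1"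
    and IM: "induced_map M N S T" and hm[measurable]: "h \<in> borel_measurable N"
    and hE: "\<forall>E\<in>sets M. emeasure M E = set_nn_integral N (S E) h"
    and rep: "\<forall>xi. Lp_fun M p xi \<longrightarrow>
           ae_eq N (s xi) (\<lambda>y. g y * complex_of_real (enn2real (h y) powr (1 / p)) * T xi y)"
    using SR unfolding spatial_realization_def by blast
  have SEm[measurable]: "S E \<in> sets N" using ST E unfolding set_transformation_def by auto
  have Tind: "AE y in N. T (indicator E) y = indicator (S E) y"
    using IM E unfolding induced_map_def ae_eq_def by auto
  have srep: "AE y in N. s (indicator E) y = g y * complex_of_real (enn2real (h y) powr (1 / p)) * T (indicator E) y"
    using rep Lp_ind(1)[OF p0 E] unfolding ae_eq_def by auto
  have "integral\<^sup>N N (\<lambda>y. h y * indicator (S E) y) \<noteq> \<infinity>" using hE E by auto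
  then have hfin: "AE y in N. h y * indicator (S E) y \<noteq> \<infinity>"
    by (intro nn_integral_noteq_infinite) auto
  define K where "K = {y\<in>space N. y \<in> S E \<and> h y = 0}"
  have Km[measurable]: "K \<in> sets N" unfolding K_def by measurable
  obtain E' where E': "E' \<in> sets M" "null_equiv N (S E') K"
    using ST Km unfolding set_transformation_def by blast
  have "emeasure M E' = set_nn_integral N (S E') h" using hE E' by auto
  also have "\<dots> = set_nn_integral N K h"
  proof (intro nn_integral_cong_AE)
    show "AE y in N. h y * indicator (S E') y = h y * indicator K y"
      using null_equiv_AE[OF E'(2)] by eventually_elim (auto simp: indicator_def)
  qed
  also have "\<dots> = 0"
  proof -
    have "(\<lambda>y. h y * indicator K y) = (\<lambda>y. 0)" by (auto simp: K_def indicator_def fun_eq_iff)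
    then show ?thesis by simp
  qed
  finally have "E' \<in> null_sets M" using E' by auto
  then have "null_equiv M E' {}" using E' by (simp add: null_equiv_def)
  then have ne: "null_equiv N (S E') (S {})" using ST unfolding set_transformation_def by blast
  have "AE y in N. y \<notin> K"
    using null_equiv_AE[OF E'(2)] null_equiv_AE[OF ne] AE_not_in[OF S_empty_null[OF ST]]
    by eventually_elim auto
  then show ?thesis using srep Tind g1 hfin AE_space
  proof eventually_elim
    case (elim y)
    show ?case
    proof (cases "y \<in> S E")
      case True
      then have "h y \<noteq> 0" "h y \<noteq> \<infinity>" using elim by (auto simp: K_def)
      then have "enn2real (h y) > 0" by (simp add: enn2real_positive_iff less_top zero_less_iff_neq_zero)
      then have "enn2real (h y) powr (1/p) > 0" by simp
      moreover have "g y \<noteq> 0" using elim by auto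
      ultimately show ?thesis using elim True by simp
    next
      case False
      then show ?thesis using elim by simp
    qed
  qed
qed



definition Rel :: "'a measure \<Rightarrow> 'b measure \<Rightarrow> (real \<Rightarrow> ('a \<Rightarrow> complex) \<Rightarrow> ('b \<Rightarrow> complex)) \<Rightarrow> real \<Rightarrow> real \<Rightarrow> bool" where
  "Rel M N s l m \<longleftrightarrow> (\<forall>E\<in>sets M. emeasure M E < \<infinity> \<longrightarrow>
      (AE y in N. (s l (indicator E) y \<noteq> 0 \<longleftrightarrow> s m (indicator E) y \<noteq> 0)))"

lemma path_Rel:
  assumes p: "p \<ge> 1" "p \<noteq> 2"
    and I: "\<forall>l\<in>{0..1}. Lp_surj_isometry M N p (s l)"
    and C: "Lp_norm_continuous_path M N p s"
  shows "Rel M N s 0 1"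
proof (rule connected_equivalence_relation[of "{0..1::real}"])
  show "connected {0..1::real}" by simp
  show "(0::real) \<in> {0..1}" "(1::real) \<in> {0..1}" by auto
  show "Rel M N s y x" if "Rel M N s x y" for x y
    unfolding Rel_def
  proof (intro ballI impI)
    fix E assume E: "E \<in> sets M" "emeasure M E < \<infinity>"
    have "AE z in N. (s x (indicator E) z \<noteq> 0) = (s y (indicator E) z \<noteq> 0)"
      using that E unfolding Rel_def by blast
    then show "AE z in N. (s y (indicator E) z \<noteq> 0) = (s x (indicator E) z \<noteq> 0)"
      by eventually_elim auto
  qed
  show "Rel M N s x z" if "Rel M N s x y" "Rel M N s y z" for x y z
    unfolding Rel_def
  proof (intro ballI impI)
    fix E assume "E \<in> sets M" "emeasure M E < \<infinity>"
    then have "AE w in N. (s x (indicator E) w \<noteq> 0) = (s y (indicator E) w \<noteq> 0)"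
      "AE w in N. (s y (indicator E) w \<noteq> 0) = (s z (indicator E) w \<noteq> 0)"
      using that unfolding Rel_def by blast+
    then show "AE w in N. (s x (indicator E) w \<noteq> 0) = (s z (indicator E) w \<noteq> 0)"
      by eventually_elim auto
  qed
  fix l :: real assume l: "l \<in> {0..1}"
  obtain d where d: "d > 0" and dd: "\<forall>m\<in>{0..1}. \<bar>m - l\<bar> < d \<longrightarrow>
        (\<forall>f. Lp_fun M p f \<longrightarrow> Lp_norm M p f \<le> 1 \<longrightarrow>
             Lp_norm N p (\<lambda>y. s m f y - s l f y) \<le> 1/2)"
    using C l unfolding Lp_norm_continuous_path_def by (meson half_gt_zero zero_less_one)
  show "\<exists>T. openin (top_of_set {0..1}) T \<and> l \<in> T \<and> (\<forall>x\<in>T. Rel M N s l x)"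
  proof (intro exI conjI ballI)
    show "openin (top_of_set {0..1}) ({0..1} \<inter> ball l d)" by (intro openin_open_Int) auto
    show "l \<in> {0..1} \<inter> ball l d" using l d by auto
    fix m assume m: "m \<in> {0..1} \<inter> ball l d"
    then have m1: "m \<in> {0..1}" and md: "\<bar>m - l\<bar> < d" by (auto simp: dist_real_def abs_minus_commute)
    have il: "iso M N p (s l)" using I l p by (simp add: iso_def)
    have im: "iso M N p (s m)" using I m1 p by (simp add: iso_def)
    have c1: "\<forall>f. Lp_fun M p f \<longrightarrow> Lp_norm M p f \<le> 1 \<longrightarrow> Lp_norm N p (\<lambda>y. s m f y - s l f y) \<le> 1/2"
      using dd m1 md by blast
    have sw: "Lp_norm N p (\<lambda>y. s l f y - s m f y) = Lp_norm N p (\<lambda>y. s m f y - s l f y)" for f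
      by (simp add: Lp_norm_def norm_minus_commute)
    have c2: "\<forall>f. Lp_fun M p f \<longrightarrow> Lp_norm M p f \<le> 1 \<longrightarrow> Lp_norm N p (\<lambda>y. s l f y - s m f y) \<le> 1/2"
      using c1 sw by simp
    show "Rel M N s l m" unfolding Rel_def
    proof (intro ballI impI)
      fix E assume E: "E \<in> sets M" "emeasure M E < \<infinity>"
      show "AE y in N. (s l (indicator E) y \<noteq> 0) = (s m (indicator E) y \<noteq> 0)"
        using close_supp[OF il im p(2) c1 E] close_supp[OF im il p(2) c2 E]
        by eventually_elim auto
    qed
  qed
qed

theorem lemma6p22:
  fixes M :: "'a measure" and N :: "'b measure" and p :: real
    and s :: "real \<Rightarrow> ('a \<Rightarrow> complex) \<Rightarrow> ('b \<Rightarrow> complex)"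
    and S0 S1 :: "'a set \<Rightarrow> 'b set"
  assumes "p \<ge> 1" and "p \<noteq> 2"
    and "sigma_finite_measure M" and "sigma_finite_measure N"
    and "\<forall>l\<in>{0..1}. Lp_surj_isometry M N p (s l)"
    and "Lp_norm_continuous_path M N p s"
    and "spatial_realization M N p (s 0) S0"
    and "spatial_realization M N p (s 1) S1"
  shows "\<forall>E\<in>sets M. null_equiv N (S0 E) (S1 E)"
proof
  have R: "Rel M N s 0 1" using path_Rel assms by blast
  have ST0: "set_transformation M N S0" and ST1: "set_transformation M N S1"
    using assms(7,8) by (auto simp: spatial_realization_def)
  have fin: "AE y in N. (y \<in> S0 B \<longleftrightarrow> y \<in> S1 B)" if B: "B \<in> sets M" "emeasure M B < \<infinity>" for B
  proof -
    have "AE y in N. (s 0 (indicator B) y \<noteq> 0 \<longleftrightarrow> s 1 (indicator B) y \<noteq> 0)"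
      using R B unfolding Rel_def by blast
    then show ?thesis using realization_supp[OF assms(1,7) B] realization_supp[OF assms(1,8) B]
      by eventually_elim auto
  qed
  fix E assume E: "E \<in> sets M"
  interpret sf: sigma_finite_measure M by fact
  obtain A :: "nat \<Rightarrow> 'a set" where A: "range A \<subseteq> sets M" "(\<Union>i. A i) = space M"
      "\<And>i. emeasure M (A i) \<noteq> \<infinity>"
    using sf.sigma_finite by blast
  define B where "B i = E \<inter> A i" for i
  have Bm: "range B \<subseteq> sets M" using A E by (auto simp: B_def)
  have Bfin: "emeasure M (B i) < \<infinity>" for i
  proof -
    have "emeasure M (B i) \<le> emeasure M (A i)" using A by (intro emeasure_mono) (auto simp: B_def)
    moreover have "emeasure M (A i) < \<infinity>" using A(3)[of i] by (simp add: less_top)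
    ultimately show ?thesis by (rule le_less_trans)
  qed
  have UB: "(\<Union>i. B i) = E" using A(2) sets.sets_into_space[OF E] by (auto simp: B_def)
  have u0: "null_equiv N (S0 E) (\<Union>i. S0 (B i))"
    using ST0 Bm unfolding set_transformation_def UB[symmetric] by blast
  have u1: "null_equiv N (S1 E) (\<Union>i. S1 (B i))"
    using ST1 Bm unfolding set_transformation_def UB[symmetric] by blast
  have "AE y in N. \<forall>i. (y \<in> S0 (B i) \<longleftrightarrow> y \<in> S1 (B i))"
    unfolding AE_all_countable using fin Bm Bfin by auto
  then have "AE y in N. (y \<in> S0 E \<longleftrightarrow> y \<in> S1 E)"
    using null_equiv_AE[OF u0] null_equiv_AE[OF u1] by eventually_elim auto
  moreover have "S0 E \<in> sets N" "S1 E \<in> sets N" using ST0 ST1 E unfolding set_transformation_def by auto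
  ultimately show "null_equiv N (S0 E) (S1 E)" by (intro AE_null_equiv)
qed


end
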